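(* Let $Z$ and $E$ be finite groups with $Z$ abelian and $E$ acting on $Z$ by automorphisms. Let $\mathcal I,\mathcal J$ be $Z\rtimes E$-sets, and let $\overline{\mathcal I},\overline{\mathcal J}$ be the $E$-sets of $Z$-orbits in $\mathcal I$ and $\mathcal J$. Let $\overline{\mathfrak J}:\overline{\mathcal I}\to\overline{\mathcal J}$ be an $E$-equivariant map. Assume: (i) for $\mathcal K\in\{\mathcal I,\mathcal J\}$ every $Z$-orbit in $\mathcal K$ contains an element $x$ with $(ZE)_x=Z_xE_x$; (ii) $Z_x=Z_y$ for every $x\in\mathcal I$ with $Z$-orbit $\overline x$ and every $y\in\overline{\mathfrak J}(\overline x)$; (iii) $\overline{\mathfrak J}$ is a bijection. Then $\overline{\mathfrak J}$ lifts to a $Z\rtimes E$-equivariant bijection $\mathfrak J:\mathcal I\to\mathcal J$ (i.e. $\mathfrak J(x)\in\overline{\mathfrak J}(Z.x)$ for all $x$).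
   Context: For a group acting on a set, $Z_x$, $E_x$, $(ZE)_x$ denote stabilizers of $x$ in $Z$, $E$, $Z\rtimes E$. *)

theory Defs
  imports "HOL-Algebra.Algebra"
begin

definition semidirect_prod ::
  "('z, 'a) monoid_scheme \<Rightarrow> ('e, 'b) monoid_scheme \<Rightarrow> ('e \<Rightarrow> 'z \<Rightarrow> 'z) \<Rightarrow> ('z \<times> 'e) monoid"
  where "semidirect_prod Z E phi =
    \<lparr> carrier = carrier Z \<times> carrier E,
      monoid.mult = (\<lambda>(z1, e1) (z2, e2). (z1 \<otimes>\<^bsub>Z\<^esub> phi e1 z2, e1 \<otimes>\<^bsub>E\<^esub> e2)),
      monoid.one = (\<one>\<^bsub>Z\<^esub>, \<one>\<^bsub>E\<^esub>) \<rparr>"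

definition Z_act :: "('e, 'b) monoid_scheme \<Rightarrow> ('z \<times> 'e \<Rightarrow> 'x \<Rightarrow> 'x) \<Rightarrow> 'z \<Rightarrow> 'x \<Rightarrow> 'x"
  where "Z_act E alpha = (\<lambda>z. alpha (z, \<one>\<^bsub>E\<^esub>))"

definition E_act :: "('z, 'a) monoid_scheme \<Rightarrow> ('z \<times> 'e \<Rightarrow> 'x \<Rightarrow> 'x) \<Rightarrow> 'e \<Rightarrow> 'x \<Rightarrow> 'x"
  where "E_act Z alpha = (\<lambda>e. alpha (\<one>\<^bsub>Z\<^esub>, e))"

definition orbit_E_act ::
  "('z, 'a) monoid_scheme \<Rightarrow> ('e, 'b) monoid_scheme \<Rightarrow> 'x set \<Rightarrow> ('z \<times> 'e \<Rightarrow> 'x \<Rightarrow> 'x) \<Rightarrow> 'e \<Rightarrow> 'x set \<Rightarrow> 'x set"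
  where "orbit_E_act Z E K alpha = (\<lambda>e. \<lambda>Ob \<in> orbits Z K (Z_act E alpha). E_act Z alpha e ` Ob)"

definition ZxEx ::
  "('z, 'a) monoid_scheme \<Rightarrow> ('e, 'b) monoid_scheme \<Rightarrow> ('e \<Rightarrow> 'z \<Rightarrow> 'z) \<Rightarrow> ('z \<times> 'e \<Rightarrow> 'x \<Rightarrow> 'x) \<Rightarrow> 'x \<Rightarrow> ('z \<times> 'e) set"
  where "ZxEx Z E phi alpha x =
    ((\<lambda>z. (z, \<one>\<^bsub>E\<^esub>)) ` stabilizer Z (Z_act E alpha) x)
      <#>\<^bsub>semidirect_prod Z E phi\<^esub> ((\<lambda>e. (\<one>\<^bsub>Z\<^esub>, e)) ` stabilizer E (E_act Z alpha) x)"

end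

theory Submission imports Defs begin

lemma (in group_action) orbit_subset: "x \<in> E \<Longrightarrow> orbit G \<phi> x \<subseteq> E"
  unfolding orbit_def using element_image by blast

lemma (in group_action) orbit_eq:
  assumes "x \<in> E" "y \<in> orbit G \<phi> x" shows "orbit G \<phi> y = orbit G \<phi> x"
proof -
  have y: "y \<in> E" using assms orbit_subset by blast
  have xy: "x \<in> orbit G \<phi> y" using orbit_sym assms y by blast
  show ?thesis
  proof
    show "orbit G \<phi> y \<subseteq> orbit G \<phi> x"
      using orbit_trans assms y orbit_subset[OF y] by blast
    show "orbit G \<phi> x \<subseteq> orbit G \<phi> y"
      using orbit_trans xy assms y orbit_subset[OF assms(1)] by blast
  qed
qed

lemma (in group_action) orbits_eq:
  assumes "Ob \<in> orbits G E \<phi>" "w \<in> Ob" shows "Ob = orbit G \<phi> w"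
  using assms orbit_eq unfolding orbits_def by blast

lemma (in group_action) orbits_subset:
  assumes "Ob \<in> orbits G E \<phi>" shows "Ob \<subseteq> E"
  using assms orbit_subset unfolding orbits_def by blast

lemma transfer:
  fixes G (structure)
  assumes A: "group_action G I alpha" and B: "group_action G J beta"
    and r: "r \<in> I" and t: "t \<in> J"
    and st: "stabilizer G alpha r \<subseteq> stabilizer G beta t"
    and g: "g \<in> carrier G" and g': "g' \<in> carrier G" and eq: "alpha g r = alpha g' r"
  shows "beta g t = beta g' t"
proof -
  interpret group G using A group_action.group_hom group_hom.axioms(1) by blast
  define k where "k = inv g \<otimes> g'"
  have k: "k \<in> carrier G" using g g' by (simp add: k_def)
  have "alpha k r = alpha (inv g) (alpha g' r)"
    unfolding k_def using group_action.composition_rule[OF A] g g' r by simp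
  also have "\<dots> = r" using eq group_action.orbit_sym_aux[OF A] g r by metis
  finally have "k \<in> stabilizer G alpha r" using k by (simp add: stabilizer_def)
  then have kt: "beta k t = t" using st by (auto simp: stabilizer_def)
  have "g \<otimes> k = g'" unfolding k_def using g g' by (simp add: m_assoc[symmetric])
  then have "beta g' t = beta g (beta k t)"
    using group_action.composition_rule[OF B] g k t by metis
  then show ?thesis using kt by simp
qed

locale sdp_act =
  fixes Z :: "('z, 'a) monoid_scheme" and E :: "('e, 'b) monoid_scheme"
    and phi :: "'e \<Rightarrow> 'z \<Rightarrow> 'z" and I :: "'i set" and alpha :: "'z \<times> 'e \<Rightarrow> 'i \<Rightarrow> 'i"
  assumes Zg: "group Z" and Eg: "group E"
    and phi_act: "group_action E (carrier Z) phi"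
    and phi_aut: "\<And>e. e \<in> carrier E \<Longrightarrow> phi e \<in> hom Z Z"
    and act: "group_action (semidirect_prod Z E phi) I alpha"
begin

abbreviation "G \<equiv> semidirect_prod Z E phi"

lemma G_mult[simp]: "(z1,e1) \<otimes>\<^bsub>G\<^esub> (z2,e2) = (z1 \<otimes>\<^bsub>Z\<^esub> phi e1 z2, e1 \<otimes>\<^bsub>E\<^esub> e2)"
  by (simp add: semidirect_prod_def)
lemma G_carrier[simp]: "carrier G = carrier Z \<times> carrier E"
  by (simp add: semidirect_prod_def)
lemma G_one[simp]: "\<one>\<^bsub>G\<^esub> = (\<one>\<^bsub>Z\<^esub>, \<one>\<^bsub>E\<^esub>)"
  by (simp add: semidirect_prod_def)

lemma ones[simp]: "\<one>\<^bsub>Z\<^esub> \<in> carrier Z" "\<one>\<^bsub>E\<^esub> \<in> carrier E"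
  using Zg Eg by (auto simp: group.is_monoid)

lemma Gg: "group G"
  using act group_action.group_hom group_hom.axioms(1) by blast

lemma phi_one: "z \<in> carrier Z \<Longrightarrow> phi \<one>\<^bsub>E\<^esub> z = z"
  using group_action.id_eq_one[OF phi_act] by (metis restrict_apply')

lemma phi_e_one: "e \<in> carrier E \<Longrightarrow> phi e \<one>\<^bsub>Z\<^esub> = \<one>\<^bsub>Z\<^esub>"
  using phi_aut Zg by (meson group_hom.hom_one group_hom.intro group_hom_axioms.intro)

lemma phi_closed: "e \<in> carrier E \<Longrightarrow> z \<in> carrier Z \<Longrightarrow> phi e z \<in> carrier Z"
  using group_action.element_image[OF phi_act] by blast

lemma phi_surj: "e \<in> carrier E \<Longrightarrow> phi e ` carrier Z = carrier Z"
  using group_action.surj_prop[OF phi_act] by blast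

lemma comp: "g \<in> carrier G \<Longrightarrow> h \<in> carrier G \<Longrightarrow> x \<in> I \<Longrightarrow> alpha (g \<otimes>\<^bsub>G\<^esub> h) x = alpha g (alpha h x)"
  using group_action.composition_rule[OF act] by blast

lemma closed: "g \<in> carrier G \<Longrightarrow> x \<in> I \<Longrightarrow> alpha g x \<in> I"
  using group_action.element_image[OF act] by blast

lemma a_one: "x \<in> I \<Longrightarrow> alpha (\<one>\<^bsub>Z\<^esub>, \<one>\<^bsub>E\<^esub>) x = x"
  using group_action.id_eq_one[OF act] by (metis G_one restrict_apply')

lemma Zact: "group_action Z I (Z_act E alpha)"
proof -
  have h: "alpha \<in> hom G (BijGroup I)"
    using act group_action.group_hom group_hom.homh by blast
  have "Z_act E alpha \<in> hom Z (BijGroup I)"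
  proof (rule homI)
    fix z assume "z \<in> carrier Z"
    then show "Z_act E alpha z \<in> carrier (BijGroup I)"
      using h Eg unfolding Z_act_def by (auto simp: hom_def group.is_monoid)
  next
    fix z z' assume zz: "z \<in> carrier Z" "z' \<in> carrier Z"
    have "Z_act E alpha (z \<otimes>\<^bsub>Z\<^esub> z') = alpha ((z, \<one>\<^bsub>E\<^esub>) \<otimes>\<^bsub>G\<^esub> (z', \<one>\<^bsub>E\<^esub>))"
      using zz Eg Zg by (simp add: Z_act_def phi_one group.is_monoid)
    also have "\<dots> = alpha (z, \<one>\<^bsub>E\<^esub>) \<otimes>\<^bsub>BijGroup I\<^esub> alpha (z', \<one>\<^bsub>E\<^esub>)"
      by (rule hom_mult[OF h]) (use zz in auto)
    finally show "Z_act E alpha (z \<otimes>\<^bsub>Z\<^esub> z') = Z_act E alpha z \<otimes>\<^bsub>BijGroup I\<^esub> Z_act E alpha z'"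
      by (simp add: Z_act_def)
  qed
  then show ?thesis
    unfolding group_action_def
    using Zg group_BijGroup by (metis group_hom.intro group_hom_axioms.intro)
qed

lemma Zorb: "orbit Z (Z_act E alpha) x = {alpha (z, \<one>\<^bsub>E\<^esub>) x | z. z \<in> carrier Z}"
  by (simp add: orbit_def Z_act_def)

lemma decomp:
  assumes "p \<in> ZxEx Z E phi alpha x"
  shows "\<exists>z1 e1. p = (z1,e1) \<and> z1 \<in> stabilizer Z (Z_act E alpha) x \<and> e1 \<in> stabilizer E (E_act Z alpha) x"
proof -
  obtain z1 e1 where z: "z1 \<in> stabilizer Z (Z_act E alpha) x" and e: "e1 \<in> stabilizer E (E_act Z alpha) x"
    and p: "p = (z1, \<one>\<^bsub>E\<^esub>) \<otimes>\<^bsub>G\<^esub> (\<one>\<^bsub>Z\<^esub>, e1)"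
    using assms unfolding ZxEx_def set_mult_def by blast
  have "z1 \<in> carrier Z" "e1 \<in> carrier E" using z e by (auto simp: stabilizer_def)
  then have "p = (z1, e1)" using p phi_e_one Eg Zg by (simp add: group.is_monoid)
  then show ?thesis using z e by blast
qed

lemma split: "z \<in> carrier Z \<Longrightarrow> e \<in> carrier E \<Longrightarrow> (z,e) = (z, \<one>\<^bsub>E\<^esub>) \<otimes>\<^bsub>G\<^esub> (\<one>\<^bsub>Z\<^esub>, e)"
  using phi_e_one Eg Zg by (simp add: group.is_monoid)

lemma orbE:
  assumes x: "x \<in> I" and e: "e \<in> carrier E"
  shows "orbit_E_act Z E I alpha e (orbit Z (Z_act E alpha) x) = orbit Z (Z_act E alpha) (alpha (\<one>\<^bsub>Z\<^esub>, e) x)"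
proof -
  have mem: "orbit Z (Z_act E alpha) x \<in> orbits Z I (Z_act E alpha)"
    using x by (auto simp: orbits_def)
  have one: "\<one>\<^bsub>Z\<^esub> \<in> carrier Z" "\<one>\<^bsub>E\<^esub> \<in> carrier E" using Zg Eg by (auto simp: group.is_monoid)
  have key: "alpha (\<one>\<^bsub>Z\<^esub>, e) (alpha (z, \<one>\<^bsub>E\<^esub>) x) = alpha (phi e z, \<one>\<^bsub>E\<^esub>) (alpha (\<one>\<^bsub>Z\<^esub>, e) x)"
    if z: "z \<in> carrier Z" for z
  proof -
    have "alpha (\<one>\<^bsub>Z\<^esub>, e) (alpha (z, \<one>\<^bsub>E\<^esub>) x) = alpha ((\<one>\<^bsub>Z\<^esub>, e) \<otimes>\<^bsub>G\<^esub> (z, \<one>\<^bsub>E\<^esub>)) x"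
      by (subst comp) (use z e one x in auto)
    also have "\<dots> = alpha ((phi e z, \<one>\<^bsub>E\<^esub>) \<otimes>\<^bsub>G\<^esub> (\<one>\<^bsub>Z\<^esub>, e)) x"
      using z e one Zg Eg phi_closed phi_e_one by (simp add: group.is_monoid)
    also have "\<dots> = alpha (phi e z, \<one>\<^bsub>E\<^esub>) (alpha (\<one>\<^bsub>Z\<^esub>, e) x)"
      by (rule comp) (use z e one x phi_closed in auto)
    finally show ?thesis .
  qed
  have "E_act Z alpha e ` orbit Z (Z_act E alpha) x = orbit Z (Z_act E alpha) (alpha (\<one>\<^bsub>Z\<^esub>, e) x)"
  proof
    show "E_act Z alpha e ` orbit Z (Z_act E alpha) x \<subseteq> orbit Z (Z_act E alpha) (alpha (\<one>\<^bsub>Z\<^esub>, e) x)"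
      unfolding Zorb E_act_def using key phi_closed e by blast
  next
    show "orbit Z (Z_act E alpha) (alpha (\<one>\<^bsub>Z\<^esub>, e) x) \<subseteq> E_act Z alpha e ` orbit Z (Z_act E alpha) x"
    proof
      fix w assume "w \<in> orbit Z (Z_act E alpha) (alpha (\<one>\<^bsub>Z\<^esub>, e) x)"
      then obtain z' where z': "z' \<in> carrier Z" "w = alpha (z', \<one>\<^bsub>E\<^esub>) (alpha (\<one>\<^bsub>Z\<^esub>, e) x)"
        unfolding Zorb by blast
      then obtain z where z: "z \<in> carrier Z" "z' = phi e z" using phi_surj[OF e] by blast
      then have "w = E_act Z alpha e (alpha (z, \<one>\<^bsub>E\<^esub>) x)" using key z' by (simp add: E_act_def)
      then show "w \<in> E_act Z alpha e ` orbit Z (Z_act E alpha) x" unfolding Zorb using z by blast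
    qed
  qed
  then show ?thesis using mem by (simp add: orbit_E_act_def)
qed


lemma Zo_sub: "x \<in> I \<Longrightarrow> orbit Z (Z_act E alpha) x \<subseteq> orbit G alpha x"
  unfolding orbit_def Z_act_def by fastforce

end

lemma stab_sub:
  assumes A: "sdp_act Z E phi I alpha" and B: "sdp_act Z E phi J beta"
    and x: "x \<in> I" and y: "y \<in> J"
    and gx: "stabilizer (semidirect_prod Z E phi) alpha x = ZxEx Z E phi alpha x"
    and gy: "stabilizer (semidirect_prod Z E phi) beta y = ZxEx Z E phi beta y"
    and zs: "stabilizer Z (Z_act E alpha) x \<subseteq> stabilizer Z (Z_act E beta) y"
    and es: "\<And>e. e \<in> stabilizer E (E_act Z alpha) x \<Longrightarrow> beta (\<one>\<^bsub>Z\<^esub>, e) y \<in> orbit Z (Z_act E beta) y"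
  shows "stabilizer (semidirect_prod Z E phi) alpha x \<subseteq> stabilizer (semidirect_prod Z E phi) beta y"
proof
  interpret A: sdp_act Z E phi I alpha by (rule A)
  interpret B: sdp_act Z E phi J beta by (rule B)
  interpret Zgr: group Z by (rule A.Zg)
  fix p assume p: "p \<in> stabilizer (semidirect_prod Z E phi) alpha x"
  then obtain z e where pz: "p = (z,e)" and zx: "z \<in> stabilizer Z (Z_act E alpha) x"
    and ex: "e \<in> stabilizer E (E_act Z alpha) x"
    using A.decomp gx by blast
  have zc: "z \<in> carrier Z" and ec: "e \<in> carrier E" using zx ex by (auto simp: stabilizer_def)
  have zy: "beta (z, \<one>\<^bsub>E\<^esub>) y = y" using zx zs by (auto simp: stabilizer_def Z_act_def)
  obtain z' where z': "z' \<in> carrier Z" "beta (\<one>\<^bsub>Z\<^esub>, e) y = beta (z', \<one>\<^bsub>E\<^esub>) y"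
    using es[OF ex] unfolding B.Zorb by blast
  have izc: "inv\<^bsub>Z\<^esub> z' \<in> carrier Z" using z' by simp
  have "beta (inv\<^bsub>Z\<^esub> z', e) y = beta (inv\<^bsub>Z\<^esub> z', \<one>\<^bsub>E\<^esub>) (beta (\<one>\<^bsub>Z\<^esub>, e) y)"
    using B.split[OF izc ec] B.comp izc ec y by (metis A.ones B.G_carrier SigmaI)
  also have "\<dots> = beta (inv\<^bsub>Z\<^esub> z', \<one>\<^bsub>E\<^esub>) (beta (z', \<one>\<^bsub>E\<^esub>) y)" using z' by simp
  also have "\<dots> = beta ((inv\<^bsub>Z\<^esub> z', \<one>\<^bsub>E\<^esub>) \<otimes>\<^bsub>semidirect_prod Z E phi\<^esub> (z', \<one>\<^bsub>E\<^esub>)) y"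
    by (rule B.comp[symmetric]) (use izc z' y in auto)
  also have "\<dots> = beta (\<one>\<^bsub>Z\<^esub>, \<one>\<^bsub>E\<^esub>) y"
    using z' izc B.phi_one A.Eg by (simp add: group.is_monoid)
  also have "\<dots> = y" using B.a_one y by simp
  finally have "(inv\<^bsub>Z\<^esub> z', e) \<in> ZxEx Z E phi beta y"
    using gy izc ec by (auto simp: stabilizer_def)
  then have ey: "e \<in> stabilizer E (E_act Z beta) y" using B.decomp by blast
  have "beta (z,e) y = beta (z, \<one>\<^bsub>E\<^esub>) (beta (\<one>\<^bsub>Z\<^esub>, e) y)"
    using B.split[OF zc ec] B.comp zc ec y by (metis A.ones B.G_carrier SigmaI)
  also have "\<dots> = y" using ey zy by (simp add: stabilizer_def E_act_def)
  finally show "p \<in> stabilizer (semidirect_prod Z E phi) beta y"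
    using pz zc ec by (simp add: stabilizer_def)
qed

theorem lemma2p1:
  fixes Z :: "('z, 'a) monoid_scheme" and E :: "('e, 'b) monoid_scheme"
    and phi :: "'e \<Rightarrow> 'z \<Rightarrow> 'z"
    and I :: "'i set" and J :: "'j set"
    and alpha :: "'z \<times> 'e \<Rightarrow> 'i \<Rightarrow> 'i" and beta :: "'z \<times> 'e \<Rightarrow> 'j \<Rightarrow> 'j"
    and Jbar :: "'i set \<Rightarrow> 'j set"
  assumes Z_comm: "comm_group Z" and E_grp: "group E"
    and Z_fin: "finite (carrier Z)" and E_fin: "finite (carrier E)"
    and phi_act: "group_action E (carrier Z) phi"
    and phi_aut: "\<And>e. e \<in> carrier E \<Longrightarrow> phi e \<in> hom Z Z"
    and alpha_act: "group_action (semidirect_prod Z E phi) I alpha"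
    and beta_act: "group_action (semidirect_prod Z E phi) J beta"
    and Jbar_maps: "\<And>Ob. Ob \<in> orbits Z I (Z_act E alpha) \<Longrightarrow> Jbar Ob \<in> orbits Z J (Z_act E beta)"
    and Jbar_equiv: "\<And>e Ob. e \<in> carrier E \<Longrightarrow> Ob \<in> orbits Z I (Z_act E alpha) \<Longrightarrow>
          Jbar (orbit_E_act Z E I alpha e Ob) = orbit_E_act Z E J beta e (Jbar Ob)"
    and cond_i_I: "\<And>Ob. Ob \<in> orbits Z I (Z_act E alpha) \<Longrightarrow>
          \<exists>x\<in>Ob. stabilizer (semidirect_prod Z E phi) alpha x = ZxEx Z E phi alpha x"
    and cond_i_J: "\<And>Ob. Ob \<in> orbits Z J (Z_act E beta) \<Longrightarrow>
          \<exists>y\<in>Ob. stabilizer (semidirect_prod Z E phi) beta y = ZxEx Z E phi beta y"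
    and cond_ii: "\<And>x y. x \<in> I \<Longrightarrow> y \<in> Jbar (orbit Z (Z_act E alpha) x) \<Longrightarrow>
          stabilizer Z (Z_act E alpha) x = stabilizer Z (Z_act E beta) y"
    and cond_iii: "bij_betw Jbar (orbits Z I (Z_act E alpha)) (orbits Z J (Z_act E beta))"
  shows "\<exists>f. bij_betw f I J
    \<and> (\<forall>g\<in>carrier (semidirect_prod Z E phi). \<forall>x\<in>I. f (alpha g x) = beta g (f x))
    \<and> (\<forall>x\<in>I. f x \<in> Jbar (orbit Z (Z_act E alpha) x))"
proof -
  let ?G = "semidirect_prod Z E phi"
  let ?ZI = "\<lambda>x. orbit Z (Z_act E alpha) x"
  let ?ZJ = "\<lambda>y. orbit Z (Z_act E beta) y"
  let ?gI = "\<lambda>x. stabilizer ?G alpha x = ZxEx Z E phi alpha x"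
  let ?gJ = "\<lambda>y. stabilizer ?G beta y = ZxEx Z E phi beta y"
  have Zg: "group Z" using Z_comm by (simp add: comm_group_def)
  have A: "sdp_act Z E phi I alpha"
    using Zg E_grp phi_act phi_aut alpha_act by (simp add: sdp_act_def)
  have B: "sdp_act Z E phi J beta"
    using Zg E_grp phi_act phi_aut beta_act by (simp add: sdp_act_def)
  interpret A: sdp_act Z E phi I alpha by (rule A)
  interpret B: sdp_act Z E phi J beta by (rule B)
  interpret GI: group_action ?G I alpha by (rule alpha_act)
  interpret GJ: group_action ?G J beta by (rule beta_act)
  interpret ZI: group_action Z I "Z_act E alpha" by (rule A.Zact)
  interpret ZJ: group_action Z J "Z_act E beta" by (rule B.Zact)
  interpret Ggr: group ?G by (rule A.Gg)
  have injJ: "inj_on Jbar (orbits Z I (Z_act E alpha))"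
    and surjJ: "Jbar ` orbits Z I (Z_act E alpha) = orbits Z J (Z_act E beta)"
    using cond_iii by (auto simp: bij_betw_def)
  have ZIo: "x \<in> I \<Longrightarrow> ?ZI x \<in> orbits Z I (Z_act E alpha)" for x by (auto simp: orbits_def)
  have ZJo: "y \<in> J \<Longrightarrow> ?ZJ y \<in> orbits Z J (Z_act E beta)" for y by (auto simp: orbits_def)

  define r where "r x' = (SOME x. x \<in> orbit ?G alpha x' \<and> ?gI x)" for x'
  define s where "s x = (SOME y. y \<in> Jbar (?ZI x) \<and> ?gJ y)" for x
  define t where "t x' = s (r x')" for x'
  define f where "f x' = beta (SOME g. g \<in> carrier ?G \<and> alpha g (r x') = x') (t x')" for x'

  have F1: "r x' \<in> orbit ?G alpha x' \<and> ?gI (r x') \<and> r x' \<in> I" if x': "x' \<in> I" for x'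
  proof -
    obtain x where "x \<in> ?ZI x'" "?gI x" using cond_i_I[OF ZIo[OF x']] by blast
    then have "\<exists>x. x \<in> orbit ?G alpha x' \<and> ?gI x" using A.Zo_sub[OF x'] by blast
    then have "r x' \<in> orbit ?G alpha x' \<and> ?gI (r x')" unfolding r_def by (rule someI_ex)
    then show ?thesis using GI.orbit_subset[OF x'] by blast
  qed
  have F2: "r x'' = r x'" if "x' \<in> I" "x'' \<in> orbit ?G alpha x'" for x' x''
    using GI.orbit_eq[OF that] unfolding r_def by simp
  have F3: "s x \<in> Jbar (?ZI x) \<and> ?gJ (s x) \<and> s x \<in> J" if x: "x \<in> I" for x
  proof -
    have o: "Jbar (?ZI x) \<in> orbits Z J (Z_act E beta)" using Jbar_maps ZIo x by blast
    then have "\<exists>y. y \<in> Jbar (?ZI x) \<and> ?gJ y" using cond_i_J by blast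
    then have "s x \<in> Jbar (?ZI x) \<and> ?gJ (s x)" unfolding s_def by (rule someI_ex)
    then show ?thesis using ZJ.orbits_subset[OF o] by blast
  qed
  have F4: "stabilizer ?G alpha x = stabilizer ?G beta y"
    if x: "x \<in> I" and gx: "?gI x" and y: "y \<in> Jbar (?ZI x)" and gy: "?gJ y" for x y
  proof -
    have o: "Jbar (?ZI x) \<in> orbits Z J (Z_act E beta)" using Jbar_maps ZIo x by blast
    have yJ: "y \<in> J" using ZJ.orbits_subset[OF o] y by blast
    have Jo: "Jbar (?ZI x) = ?ZJ y" using ZJ.orbits_eq[OF o y] .
    have zeq: "stabilizer Z (Z_act E alpha) x = stabilizer Z (Z_act E beta) y"
      using cond_ii x y by blast
    have 1: "stabilizer ?G alpha x \<subseteq> stabilizer ?G beta y"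
    proof (rule stab_sub[OF A B x yJ gx gy])
      show "stabilizer Z (Z_act E alpha) x \<subseteq> stabilizer Z (Z_act E beta) y" using zeq by simp
    next
      fix e assume e: "e \<in> stabilizer E (E_act Z alpha) x"
      have ec: "e \<in> carrier E" and ex: "alpha (\<one>\<^bsub>Z\<^esub>, e) x = x"
        using e by (auto simp: stabilizer_def E_act_def)
      have eyJ: "beta (\<one>\<^bsub>Z\<^esub>, e) y \<in> J" using B.closed yJ ec by simp
      have "?ZJ (beta (\<one>\<^bsub>Z\<^esub>, e) y) = orbit_E_act Z E J beta e (?ZJ y)"
        using B.orbE[OF yJ ec] by simp
      also have "\<dots> = orbit_E_act Z E J beta e (Jbar (?ZI x))" using Jo by simp
      also have "\<dots> = Jbar (orbit_E_act Z E I alpha e (?ZI x))"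
        using Jbar_equiv[OF ec ZIo[OF x]] by simp
      also have "\<dots> = Jbar (?ZI x)" using A.orbE[OF x ec] ex by simp
      finally have "?ZJ (beta (\<one>\<^bsub>Z\<^esub>, e) y) = ?ZJ y" using Jo by simp
      then show "beta (\<one>\<^bsub>Z\<^esub>, e) y \<in> ?ZJ y" using ZJ.orbit_refl[OF eyJ] by simp
    qed
    have 2: "stabilizer ?G beta y \<subseteq> stabilizer ?G alpha x"
    proof (rule stab_sub[OF B A yJ x gy gx])
      show "stabilizer Z (Z_act E beta) y \<subseteq> stabilizer Z (Z_act E alpha) x" using zeq by simp
    next
      fix e assume e: "e \<in> stabilizer E (E_act Z beta) y"
      have ec: "e \<in> carrier E" and ey: "beta (\<one>\<^bsub>Z\<^esub>, e) y = y"
        using e by (auto simp: stabilizer_def E_act_def)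
      have exI: "alpha (\<one>\<^bsub>Z\<^esub>, e) x \<in> I" using A.closed x ec by simp
      have "Jbar (?ZI (alpha (\<one>\<^bsub>Z\<^esub>, e) x)) = Jbar (orbit_E_act Z E I alpha e (?ZI x))"
        using A.orbE[OF x ec] by simp
      also have "\<dots> = orbit_E_act Z E J beta e (Jbar (?ZI x))"
        using Jbar_equiv[OF ec ZIo[OF x]] by simp
      also have "\<dots> = orbit_E_act Z E J beta e (?ZJ y)" using Jo by simp
      also have "\<dots> = ?ZJ y" using B.orbE[OF yJ ec] ey by simp
      finally have "Jbar (?ZI (alpha (\<one>\<^bsub>Z\<^esub>, e) x)) = Jbar (?ZI x)" using Jo by simp
      then have "?ZI (alpha (\<one>\<^bsub>Z\<^esub>, e) x) = ?ZI x"
        using injJ ZIo[OF x] ZIo[OF exI] by (meson inj_onD)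
      then show "alpha (\<one>\<^bsub>Z\<^esub>, e) x \<in> ?ZI x" using ZI.orbit_refl[OF exI] by simp
    qed
    show ?thesis using 1 2 by blast
  qed
  have F5: "stabilizer ?G alpha (r x') = stabilizer ?G beta (t x')" if x': "x' \<in> I" for x'
    using F4 F1[OF x'] F3 unfolding t_def by blast
  have F6: "\<exists>g\<in>carrier ?G. alpha g (r x') = x'" if x': "x' \<in> I" for x'
  proof -
    have "x' \<in> orbit ?G alpha (r x')" using GI.orbit_sym F1[OF x'] x' by blast
    then show ?thesis unfolding orbit_def by force
  qed
  have tJ: "t x' \<in> J" if "x' \<in> I" for x' using F1 F3 that unfolding t_def by blast
  have F7: "f x' = beta g (t x')" if x': "x' \<in> I" and g: "g \<in> carrier ?G" and eq: "alpha g (r x') = x'" for x' g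
  proof -
    have "\<exists>g. g \<in> carrier ?G \<and> alpha g (r x') = x'" using g eq by blast
    then have g0: "(SOME g. g \<in> carrier ?G \<and> alpha g (r x') = x') \<in> carrier ?G \<and>
        alpha (SOME g. g \<in> carrier ?G \<and> alpha g (r x') = x') (r x') = x'" by (rule someI_ex)
    show ?thesis unfolding f_def
      by (rule transfer[OF alpha_act beta_act _ tJ[OF x'] _ _ g]) (use F1[OF x'] F5[OF x'] g0 eq in auto)
  qed
  have equiv: "f (alpha h x') = beta h (f x')" if h: "h \<in> carrier ?G" and x': "x' \<in> I" for h x'
  proof -
    obtain g where g: "g \<in> carrier ?G" "alpha g (r x') = x'" using F6[OF x'] by blast
    have hx: "alpha h x' \<in> I" using GI.element_image h x' by blast
    have hxo: "alpha h x' \<in> orbit ?G alpha x'" using h unfolding orbit_def by blast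
    have rr: "r (alpha h x') = r x'" using F2[OF x' hxo] .
    have "alpha (h \<otimes>\<^bsub>?G\<^esub> g) (r (alpha h x')) = alpha h x'"
      using rr GI.composition_rule h g F1[OF x'] by simp
    then have "f (alpha h x') = beta (h \<otimes>\<^bsub>?G\<^esub> g) (t (alpha h x'))"
      using F7[OF hx Ggr.m_closed[OF h g(1)]] by simp
    also have "\<dots> = beta h (beta g (t x'))"
      using rr GJ.composition_rule h g tJ[OF x'] unfolding t_def by simp
    also have "\<dots> = beta h (f x')" using F7[OF x' g] by simp
    finally show ?thesis .
  qed
  have orb: "f x' \<in> Jbar (?ZI x')" if x': "x' \<in> I" for x'
  proof -
    obtain g where g: "g \<in> carrier ?G" "alpha g (r x') = x'" using F6[OF x'] by blast
    obtain z e where ge: "g = (z,e)" "z \<in> carrier Z" "e \<in> carrier E" using g(1) by auto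
    define R where "R = r x'"
    define T where "T = t x'"
    have R: "R \<in> I" "?gI R" using F1[OF x'] R_def by auto
    have T: "T \<in> Jbar (?ZI R)" "T \<in> J" using F3[OF R(1)] R_def T_def t_def by auto
    have o: "Jbar (?ZI R) \<in> orbits Z J (Z_act E beta)" using Jbar_maps ZIo R by blast
    have Jo: "Jbar (?ZI R) = ?ZJ T" using ZJ.orbits_eq[OF o T(1)] .
    have eR: "alpha (\<one>\<^bsub>Z\<^esub>, e) R \<in> I" using A.closed R ge by simp
    have "x' = alpha (z, \<one>\<^bsub>E\<^esub>) (alpha (\<one>\<^bsub>Z\<^esub>, e) R)"
      using g ge A.split[of z e] A.comp[of "(z, \<one>\<^bsub>E\<^esub>)" "(\<one>\<^bsub>Z\<^esub>, e)" R] R unfolding R_def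
      by simp
    then have "x' \<in> ?ZI (alpha (\<one>\<^bsub>Z\<^esub>, e) R)" unfolding A.Zorb using ge by blast
    then have "?ZI x' = ?ZI (alpha (\<one>\<^bsub>Z\<^esub>, e) R)" using ZI.orbit_eq[OF eR] by blast
    also have "\<dots> = orbit_E_act Z E I alpha e (?ZI R)" using A.orbE[OF R(1) ge(3)] by simp
    finally have "Jbar (?ZI x') = orbit_E_act Z E J beta e (Jbar (?ZI R))"
      using Jbar_equiv[OF ge(3) ZIo[OF R(1)]] by simp
    also have "\<dots> = ?ZJ (beta (\<one>\<^bsub>Z\<^esub>, e) T)" using Jo B.orbE[OF T(2) ge(3)] by simp
    finally have 1: "Jbar (?ZI x') = ?ZJ (beta (\<one>\<^bsub>Z\<^esub>, e) T)" .
    have "f x' = beta (z,e) T" using F7[OF x' g(1)] g ge T_def R_def by simp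
    also have "\<dots> = beta (z, \<one>\<^bsub>E\<^esub>) (beta (\<one>\<^bsub>Z\<^esub>, e) T)"
      using ge B.split[of z e] B.comp[of "(z, \<one>\<^bsub>E\<^esub>)" "(\<one>\<^bsub>Z\<^esub>, e)" T] T by simp
    finally show ?thesis unfolding 1 B.Zorb using ge by blast
  qed
  have fJ: "f x' \<in> J" if "x' \<in> I" for x'
    using orb[OF that] ZJ.orbits_subset Jbar_maps ZIo that by blast
  have inj: "inj_on f I"
  proof (rule inj_onI)
    fix x1 x2 assume x1: "x1 \<in> I" and x2: "x2 \<in> I" and eq: "f x1 = f x2"
    have o1: "Jbar (?ZI x1) \<in> orbits Z J (Z_act E beta)" using Jbar_maps ZIo x1 by blast
    have o2: "Jbar (?ZI x2) \<in> orbits Z J (Z_act E beta)" using Jbar_maps ZIo x2 by blast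
    have "Jbar (?ZI x1) = Jbar (?ZI x2)"
      using ZJ.orbits_eq[OF o1 orb[OF x1]] ZJ.orbits_eq[OF o2 orb[OF x2]] eq by simp
    then have "?ZI x1 = ?ZI x2" using injJ ZIo x1 x2 by (meson inj_onD)
    then have "x2 \<in> orbit ?G alpha x1" using ZI.orbit_refl[OF x2] A.Zo_sub[OF x1] by blast
    then have rr: "r x2 = r x1" using F2 x1 by blast
    obtain g1 where g1: "g1 \<in> carrier ?G" "alpha g1 (r x1) = x1" using F6[OF x1] by blast
    obtain g2 where g2: "g2 \<in> carrier ?G" "alpha g2 (r x1) = x2" using F6[OF x2] rr by auto
    have bb: "beta g1 (t x1) = beta g2 (t x1)"
      using F7[OF x1 g1] F7[OF x2 g2(1)] g2 rr eq unfolding t_def by simp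
    have "alpha g1 (r x1) = alpha g2 (r x1)"
      by (rule transfer[OF beta_act alpha_act tJ[OF x1] _ _ g1(1) g2(1) bb]) (use F1[OF x1] F5[OF x1] in auto)
    then show "x1 = x2" using g1 g2 by simp
  qed
  have surj: "f ` I = J"
  proof
    show "f ` I \<subseteq> J" using fJ by blast
  next
    show "J \<subseteq> f ` I"
    proof
      fix w assume w: "w \<in> J"
      obtain Ob where Ob: "Ob \<in> orbits Z I (Z_act E alpha)" "Jbar Ob = ?ZJ w"
        using surjJ ZJo[OF w] by (metis imageE)
      obtain x' where x': "x' \<in> I" "Ob = ?ZI x'" using Ob(1) by (auto simp: orbits_def)
      have "f x' \<in> ?ZJ w" using orb[OF x'(1)] Ob x' by simp
      then obtain z where z: "z \<in> carrier Z" "f x' = beta (z, \<one>\<^bsub>E\<^esub>) w" unfolding B.Zorb by blast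
      have zc: "(z, \<one>\<^bsub>E\<^esub>) \<in> carrier ?G" using z by simp
      have "beta (inv\<^bsub>?G\<^esub> (z, \<one>\<^bsub>E\<^esub>)) (f x') = w"
        using GJ.orbit_sym_aux[OF zc w] z by simp
      then have "w = f (alpha (inv\<^bsub>?G\<^esub> (z, \<one>\<^bsub>E\<^esub>)) x')"
        using equiv[OF Ggr.inv_closed[OF zc] x'(1)] by simp
      moreover have "alpha (inv\<^bsub>?G\<^esub> (z, \<one>\<^bsub>E\<^esub>)) x' \<in> I"
        using GI.element_image zc x'(1) by blast
      ultimately show "w \<in> f ` I" by blast
    qed
  qed
  show ?thesis
    using inj surj equiv orb by (auto simp: bij_betw_def)
qed

end
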